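(* Let $U$ be a finite set, $\mathcal{C}\subseteq 2^U$, and $f:2^U\to\mathbb{R}$ non-decreasing and $\varepsilon$-approximately $\mathcal{C}$-submodular for some $\varepsilon\ge 0$. Let $S\subseteq U$ be a Greedy Maximum Differential Set of $f$ (with ordering $s_1,\dots,s_{|S|}$) with $f(S)=f_{\max}$ and $\delta_{\min}>0$. Let $C\subseteq U$ be a nonempty set with $f(C)=f_{\max}$ whose elements admit an ordering $c_1,\dots,c_{|C|}$ such that $C_i=\{c_1,\dots,c_i\}\in\mathcal{C}$ for every $i=1,\dots,|C|$. Then $$|S|<\Big(1+\frac{\varepsilon}{\delta_{\min}}+\ln\Big(\frac{\delta_{\max}}{\delta_{\min}}\Big)\Big)\cdot|C|+1 .$$
   Context: For $f:2^U\to\mathbb{R}$, $A\subseteq U$, $x\in U$: $\Delta_x f(A)=f(A\cup\{x\})-f(A)$, $f_{\max}=\max_{X\subseteq U}f(X)$. $f$ is non-decreasing if $A\subseteq B\Rightarrow f(A)\le f(B)$. Given $\mathcal{C}\subseteq 2^U$, $f$ is $\varepsilon$-approximately $\mathcal{C}$-submodular if for every $A\subseteq U$, every $B\in\mathcal{C}$ and every $x\in U\setminus B$, $\Delta_x f(A\cup B)\le\Delta_x f(A)+\varepsilon$. A set $S\subseteq U$ is a Greedy Maximum Differential Set of $f$ if its elements can be ordered $s_1,\dots,s_{|S|}$ such that, with $S_0=\emptyset$, $S_i=\{s_1,\dots,s_i\}$, for every $i$: $\Delta_{s_i}f(S_{i-1})\ge\Delta_u f(S_{i-1})$ for all $u\in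 U$. For such $S$: $\delta_{\max}=\Delta_{s_1}f(\emptyset)=\max_{x\in U}\Delta_x f(\emptyset)$ and $\delta_{\min}=\min_{1\le i\le|S|}\Delta_{s_i}f(S_{i-1})$. *)

theory Defs
  imports "HOL-Analysis.Analysis"
begin

definition delta :: "('a set \<Rightarrow> real) \<Rightarrow> 'a \<Rightarrow> 'a set \<Rightarrow> real" where
  "delta f x A = f (A \<union> {x}) - f A"

definition fmax :: "'a set \<Rightarrow> ('a set \<Rightarrow> real) \<Rightarrow> real" where
  "fmax U f = Max (f ` Pow U)"

definition non_decreasing :: "'a set \<Rightarrow> ('a set \<Rightarrow> real) \<Rightarrow> bool" where
  "non_decreasing U f \<longleftrightarrow> (\<forall>A B. A \<subseteq> B \<and> B \<subseteq> U \<longrightarrow> f A \<le> f B)"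

definition approx_C_submodular ::
  "'a set \<Rightarrow> 'a set set \<Rightarrow> real \<Rightarrow> ('a set \<Rightarrow> real) \<Rightarrow> bool" where
  "approx_C_submodular U \<C> \<epsilon> f \<longleftrightarrow>
     (\<forall>A B x. A \<subseteq> U \<and> B \<in> \<C> \<and> x \<in> U - B \<longrightarrow>
        delta f x (A \<union> B) \<le> delta f x A + \<epsilon>)"

definition greedy_max_diff_seq :: "'a set \<Rightarrow> ('a set \<Rightarrow> real) \<Rightarrow> 'a list \<Rightarrow> bool" where
  "greedy_max_diff_seq U f s \<longleftrightarrow> distinct s \<and> set s \<subseteq> U \<and>
     (\<forall>i < length s. \<forall>u \<in> U. delta f u (set (take i s)) \<le> delta f (s ! i) (set (take i s)))"

definition delta_max :: "'a set \<Rightarrow> ('a set \<Rightarrow> real) \<Rightarrow> real" where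
  "delta_max U f = Max ((\<lambda>x. delta f x {}) ` U)"

definition delta_min :: "('a set \<Rightarrow> real) \<Rightarrow> 'a list \<Rightarrow> real" where
  "delta_min f s = Min ((\<lambda>i. delta f (s ! i) (set (take i s))) ` {..<length s})"

end

theory Submission
  imports Defs
begin

lemma nth_notin_take:
  assumes "distinct xs" "j < length xs"
  shows "xs ! j \<notin> set (take j xs)"
  using assms by (metis append_take_drop_id distinct_append hd_drop_conv_nth disjoint_iff list.set_sel(1) drop_eq_Nil not_le)

lemma telescope:
  fixes f :: "'a set \<Rightarrow> real"
  shows "j \<le> length c \<Longrightarrow> f (A \<union> set (take j c)) - f A = (\<Sum>i<j. delta f (c ! i) (A \<union> set (take i c)))"
proof (induction j)
  case 0
  then show ?case by simp
next
  case (Suc j)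
  then have "take (Suc j) c = take j c @ [c ! j]" by (simp add: take_Suc_conv_app_nth)
  then have "A \<union> set (take (Suc j) c) = (A \<union> set (take j c)) \<union> {c ! j}" by auto
  then show ?case using Suc by (simp add: delta_def)
qed

theorem mainTheorem2:
  fixes U :: "'a set" and \<C> :: "'a set set" and f :: "'a set \<Rightarrow> real"
    and \<epsilon> :: real and s c :: "'a list"
  assumes "finite U"
    and "\<C> \<subseteq> Pow U"
    and "\<epsilon> \<ge> 0"
    and "non_decreasing U f"
    and "approx_C_submodular U \<C> \<epsilon> f"
    and "greedy_max_diff_seq U f s"
    and "f (set s) = fmax U f"
    and "s \<noteq> []"
    and "delta_min f s > 0"
    and "distinct c" and "c \<noteq> []" and "set c \<subseteq> U"
    and "f (set c) = fmax U f"
    and "\<forall>i \<in> {1..length c}. set (take i c) \<in> \<C>"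
  shows "real (length s) <
    (1 + \<epsilon> / delta_min f s + ln (delta_max U f / delta_min f s)) * real (length c) + 1"
proof -
  define n where "n = length s"
  define k where "k = length c"
  define dm where "dm = delta_min f s"
  define dM where "dM = delta_max U f"
  define F where "F = fmax U f"
  define d where "d i = delta f (s ! i) (set (take i s))" for i
  define g where "g i = F - f (set (take i s))" for i
  have n0: "n > 0" using assms(8) n_def by simp
  have k0: "k > 0" using assms(11) k_def by simp
  have sU: "set s \<subseteq> U" and sdist: "distinct s"
    and greedy: "\<And>i u. i < n \<Longrightarrow> u \<in> U \<Longrightarrow> delta f u (set (take i s)) \<le> d i"
    using assms(6) unfolding greedy_max_diff_seq_def n_def d_def by auto
  have takeU: "set (take i s) \<subseteq> U" for i using sU set_take_subset by fast
  have mono: "\<And>A B. A \<subseteq> B \<Longrightarrow> B \<subseteq> U \<Longrightarrow> f A \<le> f B"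
    using assms(4) unfolding non_decreasing_def by blast
  have Fge: "f A \<le> F" if "A \<subseteq> U" for A
    unfolding F_def fmax_def using assms(1) that by (intro Max_ge) auto
  have dmin_le: "dm \<le> d i" if "i < n" for i
    unfolding dm_def delta_min_def d_def n_def using that n_def by (intro Min_le) auto
  have dm_pos: "dm > 0" using assms(9) dm_def by simp
  have dM_eq: "dM = d 0"
  proof -
    have "s ! 0 \<in> U" using sU n0 n_def by (simp add: subset_iff)
    moreover have "\<forall>u\<in>U. delta f u {} \<le> d 0" using greedy[of 0] n0 by simp
    ultimately show ?thesis unfolding dM_def delta_max_def d_def using assms(1)
      by (intro Max_eqI) auto
  qed
  have dm_dM: "dm \<le> dM" using dM_eq dmin_le n0 by simp
  have g_step: "g (Suc i) = g i - d i" if "i < n" for i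
  proof -
    have "take (Suc i) s = take i s @ [s ! i]" using that n_def by (simp add: take_Suc_conv_app_nth)
    then have "set (take (Suc i) s) = set (take i s) \<union> {s ! i}" by auto
    then show ?thesis unfolding g_def d_def delta_def by simp
  qed
  have gn: "g n = 0" unfolding g_def n_def F_def using assms(7) by simp
  have key: "g i \<le> real k * (d i + \<epsilon>)" if "i < n" for i
  proof -
    let ?A = "set (take i s)"
    have "F = f (set c)" using assms(13) F_def by simp
    also have "\<dots> \<le> f (?A \<union> set (take k c))" using k_def assms(12) takeU
      by (intro mono) auto
    finally have "g i \<le> (\<Sum>j<k. delta f (c ! j) (?A \<union> set (take j c)))"
      using telescope[of k c f ?A] k_def g_def by simp
    also have "\<dots> \<le> (\<Sum>j<k. d i + \<epsilon>)"
    proof (rule sum_mono)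
      fix j assume j: "j \<in> {..<k}"
      have cjU: "c ! j \<in> U" using j k_def assms(12) by (auto simp: subset_iff)
      have "delta f (c ! j) (?A \<union> set (take j c)) \<le> delta f (c ! j) ?A + \<epsilon>"
      proof (cases "j = 0")
        case True then show ?thesis using assms(3) by simp
      next
        case False
        then have "set (take j c) \<in> \<C>" using assms(14) j k_def by auto
        moreover have "c ! j \<notin> set (take j c)" using nth_notin_take assms(10) j k_def by auto
        ultimately show ?thesis using assms(5) takeU cjU unfolding approx_C_submodular_def by blast
      qed
      also have "\<dots> \<le> d i + \<epsilon>" using greedy[OF that cjU] by simp
      finally show "delta f (c ! j) (?A \<union> set (take j c)) \<le> d i + \<epsilon>" .
    qed
    finally show ?thesis by simp
  qed
  have glow: "\<forall>i. j \<le> n \<longrightarrow> g (n - j) \<ge> real j * dm" for j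
  proof (induction j)
    case 0 then show ?case using gn by simp
  next
    case (Suc j)
    show ?case
    proof (intro allI impI)
      assume h: "Suc j \<le> n"
      have e: "n - j = Suc (n - Suc j)" using h by simp
      have "g (n - j) = g (n - Suc j) - d (n - Suc j)" using g_step[of "n - Suc j"] e h by simp
      moreover have "g (n - j) \<ge> real j * dm" using Suc h by simp
      moreover have "dm \<le> d (n - Suc j)" using dmin_le h by simp
      ultimately show "g (n - Suc j) \<ge> real (Suc j) * dm" by (simp add: algebra_simps)
    qed
  qed
  define q where "q = 1 - 1 / real k"
  have q0: "0 \<le> q"
  proof -
    have "1 / real k \<le> 1" using k0 by simp
    then show ?thesis unfolding q_def by simp
  qed
  have hdecay: "i \<le> n \<longrightarrow> g i - real k * \<epsilon> \<le> q ^ i * (real k * dM)" for i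
  proof (induction i)
    case 0
    show ?case using key[of 0] n0 dM_eq by (simp add: algebra_simps)
  next
    case (Suc i)
    show ?case
    proof
      assume h: "Suc i \<le> n"
      then have i: "i < n" by simp
      have "g (Suc i) - real k * \<epsilon> = g i - d i - real k * \<epsilon>" using g_step i by simp
      also have "\<dots> \<le> q * (g i - real k * \<epsilon>)"
      proof -
        have "g i / real k - \<epsilon> \<le> d i" using key[OF i] k0 by (simp add: field_simps)
        then show ?thesis unfolding q_def using k0 by (simp add: field_simps)
      qed
      also have "\<dots> \<le> q * (q ^ i * (real k * dM))" using Suc i q0 by (intro mult_left_mono) auto
      finally show "g (Suc i) - real k * \<epsilon> \<le> q ^ Suc i * (real k * dM)" by simp
    qed
  qed
  have qexp: "q ^ j \<le> exp (- real j / real k)" for j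
  proof -
    have "q \<le> exp (- 1 / real k)" unfolding q_def using exp_ge_add_one_self[of "-1/real k"] by simp
    then have "q ^ j \<le> exp (- 1 / real k) ^ j" using q0 by (intro power_mono) auto
    also have "\<dots> = exp (real j * (- 1 / real k))" by (rule exp_of_nat_mult[symmetric])
    finally show ?thesis by simp
  qed
  define P where "P i \<longleftrightarrow> g i \<le> real k * (dm + \<epsilon>)" for i
  define m where "m = (LEAST i. P i)"
  have Pn: "P n" unfolding P_def using gn k0 dm_pos assms(3) by simp
  have mn: "m \<le> n" unfolding m_def using Pn by (rule Least_le)
  have Pm: "P m" unfolding m_def using Pn by (rule LeastI)
  have before: "\<not> P i" if "i < m" for i using that not_less_Least m_def by blast
  have tail: "real (n - m) \<le> real k * (1 + \<epsilon> / dm)"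
  proof -
    have "real (n - m) * dm \<le> g m" using glow[of "n - m"] mn by simp
    also have "\<dots> \<le> real k * (dm + \<epsilon>)" using Pm P_def by simp
    finally have "real (n - m) * dm \<le> real k * (dm + \<epsilon>)" .
    then show ?thesis using dm_pos by (simp add: field_simps)
  qed
  have lnnn: "ln (dM / dm) \<ge> 0" using dm_dM dm_pos by simp
  have head: "real m < real k * ln (dM / dm) + 1"
  proof (cases "m = 0")
    case True
    have "0 \<le> real k * ln (dM / dm)" using lnnn by simp
    then show ?thesis using True by simp
  next
    case False
    define j where "j = m - 1"
    have jm: "j < m" and jn: "j \<le> n" using False mn j_def by auto
    have "real k * dm < g j - real k * \<epsilon>" using before[OF jm] P_def by (simp add: algebra_simps)
    also have "\<dots> \<le> q ^ j * (real k * dM)" using hdecay jn by simp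
    also have "\<dots> \<le> exp (- real j / real k) * (real k * dM)"
      using qexp dm_dM dm_pos k0 by (intro mult_right_mono) auto
    finally have "dm < exp (- real j / real k) * dM" using k0 by simp
    then have "ln dm < ln (exp (- real j / real k) * dM)" using dm_pos by simp
    also have "\<dots> = - real j / real k + ln dM" using dm_pos dm_dM by (simp add: ln_mult)
    finally have "real j / real k < ln dM - ln dm" by simp
    then have "real j < real k * (ln dM - ln dm)" using k0 by (simp add: field_simps)
    then show ?thesis using j_def False dm_pos dm_dM by (simp add: ln_div)
  qed
  have "real n = real m + real (n - m)" using mn by simp
  also have "\<dots> < real k * ln (dM / dm) + 1 + real k * (1 + \<epsilon> / dm)" using head tail by simp
  finally show ?thesis unfolding n_def k_def dm_def dM_def by (simp add: algebra_simps)
qed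

end
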